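(* Let $Y$ be a strongly connected finite digraph on which a finite abelian group $G$ acts by automorphisms so that the action on $V_Y$ is free, let $H\le G$, $\Gamma=G/H$, $Z=Y_H$, $X=Y_G$, and let $F$ be an algebraically closed field of characteristic zero. Then $$N_\Gamma(\gamma_{Y/X}(u))=\gamma_{Y/Z}(u)\quad\text{in }F[H][u].$$
   Context: Digraph $Y=(V_Y,E_Y)$ with incidence $e\mapsto(o(e),t(e))$; strongly connected means a directed path exists between any two distinct vertices. For a group $K$ acting on $Y$ by automorphisms, $Y_K$ is the quotient digraph with vertices $K\backslash V_Y$, edges $K\backslash E_Y$ and induced incidence. $\mathcal{A}_Y(w)=\sum_{o(\varepsilon)=w}t(\varepsilon)$ on $\mathbb{Z}V_Y$ is $\mathbb{Z}[K]$-linear, and if $K$ acts freely on $V_Y$ then $\mathbb{Z}V_Y[u]$ is a free $\mathbb{Z}[K][u]$-module of rank $\#V_{Y_K}$. Define $\gamma_{Y/Y_K}(u)=\det_{\mathbb{Z}[K][u]}(\mathcal{I}-\mathcal{A}_Yu)\in\mathbb{Z}[K][u]$ (so $\gamma_{Y/X}$ uses $K=G$ and $\gamma_{Y/Z}$ uses $K=H$). Since $F[G][u]$ is a free $F[H][u]$-module of finite rank, $N_\Gamma:F[G][u]\to F[H][u]$ is defined by $N_\Gamma(P)=\det_{F[H][u]}(m_P)$, $m_P$ the multiplication-by-$P$ map on $F[G][u]$. *)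

theory Defs
  imports "HOL-Library.Poly_Mapping" "HOL-Computational_Algebra.Polynomial"
    "Jordan_Normal_Form.Determinant" "Graph_Theory.Digraph_Component"
begin

(* Finite abelian groups are written additively as a finite type 'g :: {finite, ab_group_add}.
   The group ring R[G] is the monoid algebra ('g \<Rightarrow>\<^sub>0 'r) of HOL-Library.Poly_Mapping
   (convolution product); the group element g is  Poly_Mapping.single g 1.
   R[G][u] is ('g \<Rightarrow>\<^sub>0 'r) poly.  For a subgroup K \<subseteq> G, R[K] (resp. R[K][u]) is the
   subring of R[G] (resp. R[G][u]) of elements supported on K. *)

definition add_subgroup :: "'g::ab_group_add set \<Rightarrow> bool" where
  "add_subgroup H \<longleftrightarrow> 0 \<in> H \<and> (\<forall>a\<in>H. \<forall>b\<in>H. a + b \<in> H) \<and> (\<forall>a\<in>H. - a \<in> H)"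

definition digraph_action ::
  "('v,'e) pre_digraph \<Rightarrow> ('g::ab_group_add \<Rightarrow> 'v \<Rightarrow> 'v) \<Rightarrow> ('g \<Rightarrow> 'e \<Rightarrow> 'e) \<Rightarrow> bool" where
  "digraph_action Y actv acte \<longleftrightarrow>
     (\<forall>g. \<forall>v\<in>verts Y. actv g v \<in> verts Y) \<and>
     (\<forall>v\<in>verts Y. actv 0 v = v) \<and>
     (\<forall>g h. \<forall>v\<in>verts Y. actv (g + h) v = actv g (actv h v)) \<and>
     (\<forall>g. \<forall>e\<in>arcs Y. acte g e \<in> arcs Y) \<and>
     (\<forall>e\<in>arcs Y. acte 0 e = e) \<and>
     (\<forall>g h. \<forall>e\<in>arcs Y. acte (g + h) e = acte g (acte h e)) \<and>
     (\<forall>g. \<forall>e\<in>arcs Y. tail Y (acte g e) = actv g (tail Y e) \<and> head Y (acte g e) = actv g (head Y e))"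

definition free_on :: "'v set \<Rightarrow> ('g::ab_group_add \<Rightarrow> 'v \<Rightarrow> 'v) \<Rightarrow> bool" where
  "free_on S actv \<longleftrightarrow> (\<forall>g. \<forall>v\<in>S. actv g v = v \<longrightarrow> g = 0)"

definition orbit_reps :: "'g set \<Rightarrow> ('g \<Rightarrow> 'v \<Rightarrow> 'v) \<Rightarrow> 'v set \<Rightarrow> 'v list" where
  "orbit_reps K act S = (SOME ws. distinct ws \<and> set ws \<subseteq> S \<and>
       (\<forall>v\<in>S. \<exists>!w. w \<in> set ws \<and> (\<exists>k\<in>K. v = act k w)))"

(* Coefficient a_ij in Z[K] of w_i in A_Y(w_j), where w = orbit representatives:
   A_Y(w_j) = sum over arcs e with tail w_j of head e = sum_i a_ij w_i, with k.w = actv k w *)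
definition adj_coeff ::
  "('v,'e) pre_digraph \<Rightarrow> ('g::{finite,ab_group_add} \<Rightarrow> 'v \<Rightarrow> 'v) \<Rightarrow> 'g set \<Rightarrow> 'v \<Rightarrow> 'v \<Rightarrow> ('g \<Rightarrow>\<^sub>0 int)" where
  "adj_coeff Y actv K wi wj =
     (\<Sum>k\<in>K. Poly_Mapping.single k (int (card {e \<in> arcs Y. tail Y e = wj \<and> head Y e = actv k wi})))"

(* gamma_{Y/Y_K}(u) = det_{Z[K][u]} (I - A_Y u), computed as the determinant of the matrix
   of I - A_Y u in the Z[K][u]-basis given by the orbit representatives *)
definition gamma ::
  "('v,'e) pre_digraph \<Rightarrow> ('g::{finite,ab_group_add} \<Rightarrow> 'v \<Rightarrow> 'v) \<Rightarrow> 'g set \<Rightarrow> ('g \<Rightarrow>\<^sub>0 int) poly" where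
  "gamma Y actv K =
     (let ws = orbit_reps K actv (verts Y); n = length ws in
      det (mat n n (\<lambda>(i,j). (if i = j then 1 else 0) - monom (adj_coeff Y actv K (ws ! i) (ws ! j)) 1)))"

(* N_Gamma : F[G][u] \<rightarrow> F[H][u], N(P) = det_{F[H][u]} (m_P), computed in the F[H][u]-basis
   of F[G][u] given by coset representatives c_1..c_m of G/H:
   P * c_j = sum_i b_ij c_i  with  b_ij = the part of P on the coset c_i - c_j + H, shifted to H *)
definition coset_part :: "'g::{finite,ab_group_add} set \<Rightarrow> 'g \<Rightarrow> ('g \<Rightarrow>\<^sub>0 'r::comm_ring_1) \<Rightarrow> ('g \<Rightarrow>\<^sub>0 'r)" where
  "coset_part H d q = (\<Sum>h\<in>H. Poly_Mapping.single h (Poly_Mapping.lookup q (d + h)))"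

definition norm_map :: "'g::{finite,ab_group_add} set \<Rightarrow> ('g \<Rightarrow>\<^sub>0 'r::comm_ring_1) poly \<Rightarrow> ('g \<Rightarrow>\<^sub>0 'r) poly" where
  "norm_map H P =
     (let cs = orbit_reps H (\<lambda>h g. h + g) UNIV; m = length cs in
      det (mat m m (\<lambda>(i,j). map_poly (coset_part H (cs ! i - cs ! j)) P)))"

definition to_field :: "('g \<Rightarrow>\<^sub>0 int) poly \<Rightarrow> ('g \<Rightarrow>\<^sub>0 'f::field) poly" where
  "to_field P = map_poly (Poly_Mapping.map of_int) P"

end

theory Submission
  imports Defs
begin


lemma det_four_block_upper_zero:
  fixes X :: "'a::comm_ring_1 mat"
  assumes X: "X \<in> carrier_mat k k" and B: "B \<in> carrier_mat k l" and D: "D \<in> carrier_mat l l"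
  shows "det (four_block_mat X B (0\<^sub>m l k) D) = det X * det D"
  using X B
proof (induction k arbitrary: X B)
  case 0
  have "four_block_mat X B (0\<^sub>m l 0) D = D"
    using 0 D by (intro eq_matI) auto
  then show ?case using 0 by simp
next
  case (Suc k)
  let ?M = "four_block_mat X B (0\<^sub>m l (Suc k)) D"
  have M: "?M \<in> carrier_mat (Suc k + l) (Suc k + l)" using Suc.prems D by auto
  have "det ?M = (\<Sum>i<Suc k + l. ?M $$ (i,0) * cofactor ?M i 0)"
    by (rule laplace_expansion_column[OF M]) simp
  also have "\<dots> = (\<Sum>i<Suc k. ?M $$ (i,0) * cofactor ?M i 0)"
  proof (rule sum.mono_neutral_right)
    show "\<forall>i\<in>{..<Suc k + l} - {..<Suc k}. ?M $$ (i,0) * cofactor ?M i 0 = 0"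
      using Suc.prems D by auto
  qed auto
  also have "\<dots> = (\<Sum>i<Suc k. X $$ (i,0) * cofactor X i 0) * det D"
    unfolding sum_distrib_right
  proof (rule sum.cong[OF refl])
    fix i assume i: "i \<in> {..<Suc k}"
    define Bd where "Bd = mat k l (\<lambda>(i',j). B $$ (if i' < i then i' else Suc i', j))"
    have "mat_delete ?M i 0 = four_block_mat (mat_delete X i 0) Bd (0\<^sub>m l k) D"
      using Suc.prems D i unfolding Bd_def mat_delete_def by (intro eq_matI) auto
    moreover have "mat_delete X i 0 \<in> carrier_mat k k" using Suc.prems unfolding mat_delete_def by auto
    moreover have "Bd \<in> carrier_mat k l" unfolding Bd_def by auto
    ultimately have "det (mat_delete ?M i 0) = det (mat_delete X i 0) * det D"
      using Suc.IH by simp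
    then show "?M $$ (i,0) * cofactor ?M i 0 = X $$ (i,0) * cofactor X i 0 * det D"
      using Suc.prems i D unfolding cofactor_def by simp
  qed
  also have "\<dots> = det X * det D"
    using laplace_expansion_column[OF Suc.prems(1), of 0] by simp
  finally show ?case .
qed

lemma det_four_block_lower_zero:
  fixes X :: "'a::comm_ring_1 mat"
  assumes X: "X \<in> carrier_mat k k" and C: "C \<in> carrier_mat l k" and D: "D \<in> carrier_mat l l"
  shows "det (four_block_mat X (0\<^sub>m k l) C D) = det X * det D"
proof -
  have "det (four_block_mat X (0\<^sub>m k l) C D) = det (transpose_mat (four_block_mat X (0\<^sub>m k l) C D))"
    by (rule det_transpose[symmetric], insert X C D, auto)
  also have "transpose_mat (four_block_mat X (0\<^sub>m k l) C D) = four_block_mat (transpose_mat X) (transpose_mat C) (0\<^sub>m l k) (transpose_mat D)"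
    by (subst transpose_four_block_mat[OF X _ C D], auto)
  also have "det \<dots> = det (transpose_mat X) * det (transpose_mat D)"
    by (rule det_four_block_upper_zero, insert X C D, auto)
  also have "\<dots> = det X * det D" using X D by (simp add: det_transpose)
  finally show ?thesis .
qed

lemma sum_div_mod_split:
  fixes f :: "nat \<Rightarrow> 'a::comm_monoid_add"
  shows "(\<Sum>z<q*m. f z) = (\<Sum>j<q. \<Sum>t<m. f (j*m+t))"
proof -
  have "(\<Sum>z<q*m. f z) = (\<Sum>j<q. sum f {j*m..<j*m+m})"
    using sum.nat_group[of f m q] by simp
  also have "\<dots> = (\<Sum>j<q. \<Sum>t<m. f (j*m+t))"
  proof (rule sum.cong[OF refl])
    fix j
    have "sum f {0 + j*m..<m + j*m} = (\<Sum>t\<in>{0..<m}. f (t + j*m))"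
      by (rule sum.shift_bounds_nat_ivl)
    then show "sum f {j*m..<j*m+m} = (\<Sum>t<m. f (j*m+t))"
      by (simp add: add.commute atLeast0LessThan)
  qed
  finally show ?thesis .
qed

lemma div_mod_shift:
  assumes "0 < (m::nat)" "p1 * m \<le> p"
  shows "(p - p1*m) div m = p div m - p1" "(p - p1*m) mod m = p mod m"
proof -
  obtain p' where p: "p = p' + p1 * m" using assms(2) by (metis le_add_diff_inverse2)
  show "(p - p1*m) div m = p div m - p1" "(p - p1*m) mod m = p mod m"
    using assms(1) unfolding p by auto
qed

definition blkm :: "('a \<Rightarrow> nat \<Rightarrow> nat \<Rightarrow> 'a) \<Rightarrow> nat \<Rightarrow> 'a mat \<Rightarrow> 'a mat" where
  "blkm r m A = mat (dim_row A * m) (dim_col A * m) (\<lambda>(p,q). r (A $$ (p div m, q div m)) (p mod m) (q mod m))"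

definition rmat :: "('a \<Rightarrow> nat \<Rightarrow> nat \<Rightarrow> 'a) \<Rightarrow> nat \<Rightarrow> 'a \<Rightarrow> 'a mat" where
  "rmat r m x = mat m m (\<lambda>(k,l). r x k l)"

lemma blkm_carrier[simp]: "blkm r m A \<in> carrier_mat (dim_row A * m) (dim_col A * m)"
  and blkm_dims[simp]: "dim_row (blkm r m A) = dim_row A * m" "dim_col (blkm r m A) = dim_col A * m"
  unfolding blkm_def by auto

lemma rmat_carrier[simp]: "rmat r m x \<in> carrier_mat m m"
  and rmat_dims[simp]: "dim_row (rmat r m x) = m" "dim_col (rmat r m x) = m"
  unfolding rmat_def by auto

lemma blkm_index: "p < dim_row A * m \<Longrightarrow> q < dim_col A * m \<Longrightarrow>
  blkm r m A $$ (p,q) = r (A $$ (p div m, q div m)) (p mod m) (q mod m)"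
  unfolding blkm_def by simp

lemma blkm_four_block:
  assumes A1: "A1 \<in> carrier_mat p1 q1" and A2: "A2 \<in> carrier_mat p1 q2"
    and A3: "A3 \<in> carrier_mat p2 q1" and A4: "A4 \<in> carrier_mat p2 q2"
  shows "blkm r m (four_block_mat A1 A2 A3 A4) = four_block_mat (blkm r m A1) (blkm r m A2) (blkm r m A3) (blkm r m A4)"
proof (rule eq_matI)
  show "dim_row (blkm r m (four_block_mat A1 A2 A3 A4)) = dim_row (four_block_mat (blkm r m A1) (blkm r m A2) (blkm r m A3) (blkm r m A4))"
    using assms by (simp add: algebra_simps)
  show "dim_col (blkm r m (four_block_mat A1 A2 A3 A4)) = dim_col (four_block_mat (blkm r m A1) (blkm r m A2) (blkm r m A3) (blkm r m A4))"
    using assms by (simp add: algebra_simps)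
  fix i j
  assume i: "i < dim_row (four_block_mat (blkm r m A1) (blkm r m A2) (blkm r m A3) (blkm r m A4))"
    and j: "j < dim_col (four_block_mat (blkm r m A1) (blkm r m A2) (blkm r m A3) (blkm r m A4))"
  have i': "i < (p1 + p2) * m" and j': "j < (q1 + q2) * m" using i j assms by (auto simp: algebra_simps)
  then have m: "0 < m" by (cases m) auto
  have d1: "i div m < p1 \<longleftrightarrow> i < p1 * m" "j div m < q1 \<longleftrightarrow> j < q1 * m"
    using m by (auto simp: div_less_iff_less_mult)
  have idm: "i div m < p1 + p2" "j div m < q1 + q2" using i' j' m by (auto simp: div_less_iff_less_mult)
  show "blkm r m (four_block_mat A1 A2 A3 A4) $$ (i, j) = four_block_mat (blkm r m A1) (blkm r m A2) (blkm r m A3) (blkm r m A4) $$ (i, j)"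
    using assms i' j' idm d1 div_mod_shift[OF m, of p1 i] div_mod_shift[OF m, of q1 j]
    by (auto simp: blkm_index algebra_simps)
qed

locale blk_ctx =
  fixes r :: "'a::comm_ring_1 \<Rightarrow> nat \<Rightarrow> nat \<Rightarrow> 'a" and m :: nat and eps :: "'a \<Rightarrow> 'b::comm_ring_1"
  assumes r1: "k < m \<Longrightarrow> l < m \<Longrightarrow> r 1 k l = (if k = l then 1 else 0)"
    and radd: "k < m \<Longrightarrow> l < m \<Longrightarrow> r (x + y) k l = r x k l + r y k l"
    and rmult: "k < m \<Longrightarrow> l < m \<Longrightarrow> r (x * y) k l = (\<Sum>t<m. r x k t * r y t l)"
    and eps: "comm_ring_hom eps"
    and nzd: "eps x = 1 \<Longrightarrow> det (rmat r m x) * y = 0 \<Longrightarrow> y = 0"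
begin

lemma r0: "k < m \<Longrightarrow> l < m \<Longrightarrow> r 0 k l = 0"
  using radd[of k l 0 0] by simp

lemma rsum: "k < m \<Longrightarrow> l < m \<Longrightarrow> r (sum f S) k l = (\<Sum>s\<in>S. r (f s) k l)"
proof (induction S rule: infinite_finite_induct)
  case (infinite A) then show ?case by (simp add: r0)
next
  case empty then show ?case by (simp add: r0)
next
  case (insert x F) then show ?case by (simp add: radd)
qed

lemma rneg: "k < m \<Longrightarrow> l < m \<Longrightarrow> r (- x) k l = - r x k l"
  using radd[of k l x "-x"] r0[of k l] by (metis neg_eq_iff_add_eq_0 right_minus)

lemma rdiff: "k < m \<Longrightarrow> l < m \<Longrightarrow> r (x - y) k l = r x k l - r y k l"
  using radd[of k l x "-y"] rneg[of k l y] by simp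

lemma rmat_mult: "rmat r m (x * y) = rmat r m x * rmat r m y"
  by (rule eq_matI) (auto simp: rmat_def rmult scalar_prod_def atLeast0LessThan intro: sum.cong)

lemma rmat_one: "rmat r m 1 = 1\<^sub>m m"
  by (rule eq_matI) (auto simp: rmat_def r1)

lemma det_rmat_mult: "det (rmat r m (x * y)) = det (rmat r m x) * det (rmat r m y)"
  by (simp add: rmat_mult det_mult[of _ m])

lemma blkm_mult:
  assumes X: "X \<in> carrier_mat p q" and Y: "Y \<in> carrier_mat q s"
  shows "blkm r m (X * Y) = blkm r m X * blkm r m Y"
proof (rule eq_matI)
  fix i j assume i: "i < dim_row (blkm r m X * blkm r m Y)" and j: "j < dim_col (blkm r m X * blkm r m Y)"
  have i': "i < p * m" and j': "j < s * m" using i j X Y by auto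
  then have m: "0 < m" by (cases m) auto
  have id: "i div m < p" "j div m < s" using i' j' m by (auto simp: div_less_iff_less_mult)
  have im: "i mod m < m" "j mod m < m" using m by auto
  have "blkm r m (X * Y) $$ (i,j) = r ((X*Y) $$ (i div m, j div m)) (i mod m) (j mod m)"
    using i' j' X Y by (simp add: blkm_index)
  also have "\<dots> = r (\<Sum>z<q. X $$ (i div m, z) * Y $$ (z, j div m)) (i mod m) (j mod m)"
    using X Y id by (simp add: scalar_prod_def atLeast0LessThan)
  also have "\<dots> = (\<Sum>z<q. \<Sum>t<m. r (X $$ (i div m, z)) (i mod m) t * r (Y $$ (z, j div m)) t (j mod m))"
    using im by (simp add: rsum rmult)
  also have "\<dots> = (\<Sum>w<q*m. blkm r m X $$ (i, w) * blkm r m Y $$ (w, j))"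
    unfolding sum_div_mod_split
  proof (intro sum.cong refl)
    fix z t assume z: "z \<in> {..<q}" and t: "t \<in> {..<m}"
    have "z * m + t < Suc z * m" using t by simp
    also have "Suc z * m \<le> q * m" using z by (intro mult_le_mono1) simp
    finally have "z * m + t < q * m" .
    then show "r (X $$ (i div m, z)) (i mod m) t * r (Y $$ (z, j div m)) t (j mod m) = blkm r m X $$ (i, z * m + t) * blkm r m Y $$ (z * m + t, j)"
      using X Y i' j' t m by (simp add: blkm_index)
  qed
  also have "\<dots> = (blkm r m X * blkm r m Y) $$ (i,j)"
    using i' j' X Y by (simp add: scalar_prod_def atLeast0LessThan)
  finally show "blkm r m (X * Y) $$ (i,j) = (blkm r m X * blkm r m Y) $$ (i,j)" .
qed (insert X Y, auto)

end



context blk_ctx begin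

theorem blk_det:
  assumes "A \<in> carrier_mat n n"
    and "\<And>i j. i < n \<Longrightarrow> j < n \<Longrightarrow> eps (A $$ (i,j)) = (if i = j then 1 else 0)"
  shows "det (blkm r m A) = det (rmat r m (det A))"
  using assms
proof (induction n arbitrary: A)
  case 0
  then have "blkm r m A \<in> carrier_mat 0 0" by (metis blkm_carrier carrier_matD(1) carrier_matD(2) mult_0)  
  then show ?case using 0 by (simp add: rmat_one)
next
  case (Suc n)
  note A = Suc.prems(1)
  interpret e: comm_ring_hom eps by (rule eps)
  define a where "a = A $$ (0,0)"
  have ea: "eps a = 1" using Suc.prems(2)[of 0 0] by (simp add: a_def)
  define S where "S = mat n n (\<lambda>(i,j). a * A $$ (Suc i, Suc j) - A $$ (Suc i, 0) * A $$ (0, Suc j))"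
  define C where "C = mat n 1 (\<lambda>(i,_). - A $$ (Suc i, 0))"
  define L where "L = four_block_mat (1\<^sub>m 1) (0\<^sub>m 1 n) C (a \<cdot>\<^sub>m 1\<^sub>m n)"
  define R where "R = mat 1 n (\<lambda>(_,j). A $$ (0, Suc j))"
  define A1 where "A1 = mat 1 1 (\<lambda>_. a)"
  define LA where "LA = four_block_mat A1 R (0\<^sub>m n 1) S"
  have Sc: "S \<in> carrier_mat n n" and Cc: "C \<in> carrier_mat n 1" and Rc: "R \<in> carrier_mat 1 n" and A1c: "A1 \<in> carrier_mat 1 1"
    unfolding S_def C_def R_def A1_def by auto
  have Lc: "L \<in> carrier_mat (Suc n) (Suc n)" unfolding L_def using Cc by auto
  have LAc: "LA \<in> carrier_mat (Suc n) (Suc n)" unfolding LA_def using Sc A1c by auto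
  have LA_eq: "L * A = LA"
  proof (rule eq_matI)
    fix i j assume i: "i < dim_row LA" and j: "j < dim_col LA"
    have i': "i < Suc n" and j': "j < Suc n" using i j LAc by auto
    have "(L * A) $$ (i,j) = (\<Sum>k\<in>{0..<Suc n}. L $$ (i,k) * A $$ (k,j))"
      using Lc A i' j' by (simp add: scalar_prod_def)
    also have "\<dots> = L $$ (i,0) * A $$ (0,j) + (\<Sum>k\<in>{0..<n}. L $$ (i,Suc k) * A $$ (Suc k,j))"
      by (simp only: sum.atLeast0_lessThan_Suc_shift o_def)
    finally have LAij: "(L * A) $$ (i,j) = L $$ (i,0) * A $$ (0,j) + (\<Sum>k\<in>{0..<n}. L $$ (i,Suc k) * A $$ (Suc k,j))" .
    show "(L * A) $$ (i,j) = LA $$ (i,j)"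
    proof (cases i)
      case 0
      have "L $$ (i, Suc k) = 0" if "k < n" for k using that 0 Cc unfolding L_def by simp
      moreover have "L $$ (i,0) = 1" using 0 Cc unfolding L_def by simp
      ultimately have "(L * A) $$ (i,j) = A $$ (0,j)" unfolding LAij by simp
      then show ?thesis using 0 j' Sc Rc A1c unfolding LA_def R_def A1_def a_def
        by (cases j) auto
    next
      case (Suc i0)
      have i0: "i0 < n" using i' Suc by simp
      have "L $$ (i, Suc k) = (if k = i0 then a else 0)" if "k < n" for k using that Suc Cc i0 unfolding L_def by simp
      then have "(\<Sum>k\<in>{0..<n}. L $$ (i,Suc k) * A $$ (Suc k,j)) = (\<Sum>k\<in>{0..<n}. if k = i0 then a * A $$ (Suc k,j) else 0)"
        by (intro sum.cong) auto
      also have "\<dots> = a * A $$ (Suc i0, j)" using i0 by simp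
      finally have s: "(\<Sum>k\<in>{0..<n}. L $$ (i,Suc k) * A $$ (Suc k,j)) = a * A $$ (Suc i0, j)" .
      have l0: "L $$ (i,0) = - A $$ (Suc i0, 0)" using Suc Cc i0 unfolding L_def C_def by simp
      show ?thesis
      proof (cases j)
        case 0
        then show ?thesis unfolding LAij s l0 using Suc i0 Sc A1c Rc unfolding LA_def a_def by (simp add: algebra_simps)
      next
        case (Suc j0)
        then show ?thesis unfolding LAij s l0 using \<open>i = Suc i0\<close> i0 j' Sc A1c Rc unfolding LA_def S_def by (simp add: algebra_simps)
      qed
    qed
  qed (use Lc LAc A in auto)
  have detL: "det L = a ^ n"
    unfolding L_def by (subst det_four_block_lower_zero[OF _ Cc], auto)
  have detLA: "det LA = a * det S"
  proof -
    have "det A1 = a" using det_single[OF A1c] by (simp add: A1_def)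
    then show ?thesis unfolding LA_def by (subst det_four_block_upper_zero[OF A1c Rc Sc]) simp
  qed
  have eq1: "a ^ n * det A = a * det S"
    using det_mult[OF Lc A] LA_eq detL detLA by simp
  have epsS: "eps (S $$ (i,j)) = (if i = j then 1 else 0)" if "i < n" "j < n" for i j
    using that Suc.prems(2)[of "Suc i" "Suc j"] Suc.prems(2)[of "Suc i" 0] Suc.prems(2)[of 0 "Suc j"] ea
    unfolding S_def by (simp add: e.hom_mult e.hom_add e.hom_uminus e.hom_minus)
  have epsaI: "eps ((a \<cdot>\<^sub>m 1\<^sub>m n) $$ (i,j)) = (if i = j then 1 else 0)" if "i < n" "j < n" for i j
    using that ea by simp
  have IH_S: "det (blkm r m S) = det (rmat r m (det S))" by (rule Suc.IH[OF Sc epsS])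
  have IH_aI: "det (blkm r m (a \<cdot>\<^sub>m 1\<^sub>m n)) = det (rmat r m (a ^ n))"
    using Suc.IH[of "a \<cdot>\<^sub>m 1\<^sub>m n", OF _ epsaI] by simp
  have b1: "blkm r m (1\<^sub>m 1) = 1\<^sub>m m"
    by (rule eq_matI) (auto simp: blkm_index r1)
  have b0: "blkm r m (0\<^sub>m 1 n) = 0\<^sub>m m (n * m)"
  proof (rule eq_matI)
    fix i j assume "i < dim_row (0\<^sub>m m (n * m))" "j < dim_col (0\<^sub>m m (n * m))"
    then have "i < m" "j < n * m" by auto
    moreover then have "j div m < n" "0 < m" by (auto simp: div_less_iff_less_mult)
    ultimately show "blkm r m (0\<^sub>m 1 n) $$ (i, j) = 0\<^sub>m m (n * m) $$ (i, j)"
      by (simp add: blkm_index r0)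
  qed auto
  have b0': "blkm r m (0\<^sub>m n 1) = 0\<^sub>m (n * m) m"
  proof (rule eq_matI)
    fix i j assume "i < dim_row (0\<^sub>m (n * m) m)" "j < dim_col (0\<^sub>m (n * m) m)"
    then have "j < m" "i < n * m" by auto
    moreover then have "i div m < n" "0 < m" by (auto simp: div_less_iff_less_mult)
    ultimately show "blkm r m (0\<^sub>m n 1) $$ (i, j) = 0\<^sub>m (n * m) m $$ (i, j)"
      by (simp add: blkm_index r0)
  qed auto
  have bA1: "blkm r m A1 = rmat r m a"
    by (rule eq_matI) (auto simp: blkm_index A1_def rmat_def)
  have bL: "blkm r m L = four_block_mat (1\<^sub>m m) (0\<^sub>m m (n * m)) (blkm r m C) (blkm r m (a \<cdot>\<^sub>m 1\<^sub>m n))"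
  proof -
    have c1: "1\<^sub>m 1 \<in> carrier_mat 1 1" "0\<^sub>m 1 n \<in> carrier_mat 1 n" "a \<cdot>\<^sub>m 1\<^sub>m n \<in> carrier_mat n n" by auto
    show ?thesis unfolding L_def blkm_four_block[OF c1(1,2) Cc c1(3)] b1 b0 by simp
  qed
  have bLA: "blkm r m LA = four_block_mat (rmat r m a) (blkm r m R) (0\<^sub>m (n * m) m) (blkm r m S)"
  proof -
    have c1: "0\<^sub>m n 1 \<in> carrier_mat n 1" by auto
    show ?thesis unfolding LA_def blkm_four_block[OF A1c Rc c1 Sc] bA1 b0' by simp
  qed
  have dbL: "det (blkm r m L) = det (rmat r m (a ^ n))"
    unfolding bL IH_aI[symmetric]
    by (subst det_four_block_lower_zero[of _ m _ "n * m"]) (use Cc in auto)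
  have dbLA: "det (blkm r m LA) = det (rmat r m a) * det (rmat r m (det S))"
    unfolding bLA IH_S[symmetric]
    by (subst det_four_block_upper_zero[of _ m _ "n * m"]) (use Rc Sc in auto)
  have "blkm r m LA = blkm r m L * blkm r m A" 
    using blkm_mult[OF Lc A] LA_eq by simp
  then have "det (blkm r m LA) = det (blkm r m L) * det (blkm r m A)"
  proof -
    have "blkm r m L \<in> carrier_mat (Suc n * m) (Suc n * m)" "blkm r m A \<in> carrier_mat (Suc n * m) (Suc n * m)"
      using Lc A blkm_carrier[of r m L] blkm_carrier[of r m A] by auto
    from det_mult[OF this] show ?thesis using \<open>blkm r m LA = blkm r m L * blkm r m A\<close> by simp
  qed
  then have X1: "det (rmat r m (a ^ n)) * det (blkm r m A) = det (rmat r m a) * det (rmat r m (det S))"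
    using dbL dbLA by simp
  have X2: "det (rmat r m (a ^ n)) * det (rmat r m (det A)) = det (rmat r m a) * det (rmat r m (det S))"
    by (simp add: det_rmat_mult[symmetric] eq1)
  have "det (rmat r m (a ^ n)) * (det (blkm r m A) - det (rmat r m (det A))) = 0"
    using X1 X2 by (simp add: right_diff_distrib)
  moreover have "eps (a ^ n) = 1" using ea by (simp add: e.hom_power)
  ultimately show ?case using nzd by fastforce
qed

end


lemma lookup_mult_group:
  fixes p q :: "'g::{finite,ab_group_add} \<Rightarrow>\<^sub>0 'r::comm_ring_1"
  shows "Poly_Mapping.lookup (p * q) k = (\<Sum>l\<in>UNIV. Poly_Mapping.lookup p l * Poly_Mapping.lookup q (k - l))"
proof -
  have inner: "Sum_any (\<lambda>q'::'g. Poly_Mapping.lookup q q' when k = l + q') = Poly_Mapping.lookup q (k - l)" for l :: 'g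
  proof -
    have "Sum_any (\<lambda>q'. Poly_Mapping.lookup q q' when k = l + q') = (\<Sum>q'\<in>(UNIV::'g set). Poly_Mapping.lookup q q' when k = l + q')"
      by (rule Sum_any.expand_superset) auto
    also have "\<dots> = (\<Sum>q'\<in>(UNIV::'g set). if q' = k - l then Poly_Mapping.lookup q q' else 0)"
      by (intro sum.cong) (auto simp: when_def algebra_simps)
    also have "\<dots> = Poly_Mapping.lookup q (k - l)" by simp
    finally show ?thesis .
  qed
  have "Poly_Mapping.lookup (p * q) k = Sum_any (\<lambda>l. Poly_Mapping.lookup p l * Poly_Mapping.lookup q (k - l))"
    unfolding lookup_mult inner ..
  also have "\<dots> = (\<Sum>l\<in>UNIV. Poly_Mapping.lookup p l * Poly_Mapping.lookup q (k - l))"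
    by (rule Sum_any.expand_superset) auto
  finally show ?thesis .
qed

lemma lookup_map_zero: "f 0 = 0 \<Longrightarrow> Poly_Mapping.lookup (Poly_Mapping.map f p) k = f (Poly_Mapping.lookup p k)"
  by transfer (auto simp: when_def)

lemma map_of_int_hom: "comm_ring_hom (Poly_Mapping.map (of_int :: int \<Rightarrow> 'r::comm_ring_1) :: ('g::{finite,ab_group_add} \<Rightarrow>\<^sub>0 int) \<Rightarrow> _)"
proof
  fix x y :: "'g \<Rightarrow>\<^sub>0 int"
  show "Poly_Mapping.map of_int (x + y) = (Poly_Mapping.map of_int x + Poly_Mapping.map of_int y :: 'g \<Rightarrow>\<^sub>0 'r)"
    by (rule poly_mapping_eqI) (simp add: lookup_map_zero lookup_add)
  show "Poly_Mapping.map of_int (x * y) = (Poly_Mapping.map of_int x * Poly_Mapping.map of_int y :: 'g \<Rightarrow>\<^sub>0 'r)"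
    by (rule poly_mapping_eqI) (simp add: lookup_map_zero lookup_mult_group)
  show "Poly_Mapping.map of_int 1 = (1 :: 'g \<Rightarrow>\<^sub>0 'r)"
    by (rule poly_mapping_eqI) (simp add: lookup_map_zero lookup_one when_def)
  show "Poly_Mapping.map of_int 0 = (0 :: 'g \<Rightarrow>\<^sub>0 'r)"
    by (rule poly_mapping_eqI) (simp add: lookup_map_zero)
qed

lemma to_field_hom: "comm_ring_hom (to_field :: ('g::{finite,ab_group_add} \<Rightarrow>\<^sub>0 int) poly \<Rightarrow> ('g \<Rightarrow>\<^sub>0 'f::field) poly)"
proof -
  interpret m: comm_ring_hom "Poly_Mapping.map (of_int :: int \<Rightarrow> 'f) :: ('g \<Rightarrow>\<^sub>0 int) \<Rightarrow> _"
    by (rule map_of_int_hom)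
  show ?thesis
  proof
    fix x y :: "('g \<Rightarrow>\<^sub>0 int) poly"
    show "(to_field (x + y) :: ('g \<Rightarrow>\<^sub>0 'f) poly) = to_field x + to_field y"
      by (rule poly_eqI) (simp add: to_field_def coeff_map_poly m.hom_add)
    show "(to_field (x * y) :: ('g \<Rightarrow>\<^sub>0 'f) poly) = to_field x * to_field y"
      by (rule poly_eqI) (simp add: to_field_def coeff_map_poly coeff_mult m.hom_sum m.hom_mult)
    show "(to_field 1 :: ('g \<Rightarrow>\<^sub>0 'f) poly) = 1"
      by (simp add: to_field_def)
    show "(to_field 0 :: ('g \<Rightarrow>\<^sub>0 'f) poly) = 0"
      by (simp add: to_field_def)
  qed
qed

lemma coeff0_hom: "comm_ring_hom (\<lambda>P :: 'a::comm_ring_1 poly. coeff P 0)"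
  by unfold_locales (auto simp: coeff_mult_0)

lemma poly_nzd:
  fixes p q :: "'a::comm_ring_1 poly"
  assumes "coeff p 0 = 1" "p * q = 0"
  shows "q = 0"
proof -
  have "coeff q k = 0" for k
  proof (induction k rule: less_induct)
    case (less k)
    have "0 = coeff (p * q) k" using assms by simp
    also have "\<dots> = (\<Sum>i\<le>k. coeff p i * coeff q (k - i))" by (rule coeff_mult)
    also have "\<dots> = (\<Sum>i\<in>{0}. coeff p i * coeff q (k - i))"
    proof (rule sum.mono_neutral_right)
      show "\<forall>i\<in>{..k} - {0}. coeff p i * coeff q (k - i) = 0"
        using less by auto
    qed auto
    finally show ?case using assms by simp
  qed
  then show ?thesis by (simp add: poly_eqI)
qed

lemma lookup_coset_part:
  fixes H :: "'g::{finite,ab_group_add} set" and q :: "'g \<Rightarrow>\<^sub>0 'r::comm_ring_1"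
  shows "Poly_Mapping.lookup (coset_part H d q) x = (if x \<in> H then Poly_Mapping.lookup q (d + x) else 0)"
proof -
  have "Poly_Mapping.lookup (coset_part H d q) x = (\<Sum>h\<in>H. if h = x then Poly_Mapping.lookup q (d + h) else 0)"
    unfolding coset_part_def lookup_sum by (intro sum.cong) (auto simp: lookup_single when_def)
  also have "\<dots> = (if x \<in> H then Poly_Mapping.lookup q (d + x) else 0)" by simp
  finally show ?thesis .
qed

lemma coset_part_add: "coset_part H d (p + q) = coset_part H d p + coset_part H d (q :: 'g::{finite,ab_group_add} \<Rightarrow>\<^sub>0 'r::comm_ring_1)"
  by (rule poly_mapping_eqI) (simp add: lookup_coset_part lookup_add)

lemma coset_part_0[simp]: "coset_part H d (0 :: 'g::{finite,ab_group_add} \<Rightarrow>\<^sub>0 'r::comm_ring_1) = 0"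
  by (rule poly_mapping_eqI) (simp add: lookup_coset_part)

lemma coset_part_sum: "coset_part H d (sum f S) = (\<Sum>s\<in>S. coset_part H d (f s :: 'g::{finite,ab_group_add} \<Rightarrow>\<^sub>0 'r::comm_ring_1))"
  by (rule poly_mapping_eqI) (simp add: lookup_coset_part lookup_sum)



definition is_reps :: "'g set \<Rightarrow> ('g \<Rightarrow> 'v \<Rightarrow> 'v) \<Rightarrow> 'v set \<Rightarrow> 'v list \<Rightarrow> bool" where
  "is_reps K act S ws \<longleftrightarrow> distinct ws \<and> set ws \<subseteq> S \<and>
       (\<forall>v\<in>S. \<exists>!w. w \<in> set ws \<and> (\<exists>k\<in>K. v = act k w))"

lemma orbit_reps_ok:
  fixes K :: "'g::ab_group_add set" and act :: "'g \<Rightarrow> 'v \<Rightarrow> 'v"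
  assumes S: "finite S" and K: "add_subgroup K"
    and cl: "\<And>k v. k \<in> K \<Longrightarrow> v \<in> S \<Longrightarrow> act k v \<in> S"
    and a0: "\<And>v. v \<in> S \<Longrightarrow> act 0 v = v"
    and aa: "\<And>a b v. a \<in> K \<Longrightarrow> b \<in> K \<Longrightarrow> v \<in> S \<Longrightarrow> act (a + b) v = act a (act b v)"
  shows "is_reps K act S (orbit_reps K act S)"
proof -
  have K0: "0 \<in> K" and Kadd: "\<And>a b. a \<in> K \<Longrightarrow> b \<in> K \<Longrightarrow> a + b \<in> K" and Kneg: "\<And>a. a \<in> K \<Longrightarrow> - a \<in> K"
    using K unfolding add_subgroup_def by auto
  define orb where "orb v = {act k v | k. k \<in> K}" for v
  have orbS: "orb v \<subseteq> S" if "v \<in> S" for v using that cl unfolding orb_def by auto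
  have self: "v \<in> orb v" if "v \<in> S" for v using that a0 K0 unfolding orb_def by force
  have key: "orb w = orb v" if v: "v \<in> S" and w: "w \<in> orb v" for v w
  proof -
    obtain k where k: "k \<in> K" "w = act k v" using w unfolding orb_def by auto
    show ?thesis
    proof
      show "orb w \<subseteq> orb v"
      proof
        fix x assume "x \<in> orb w"
        then obtain k' where k': "k' \<in> K" "x = act k' w" unfolding orb_def by auto
        have "x = act (k' + k) v" using aa[OF k'(1) k(1) v] k' k by simp
        then show "x \<in> orb v" unfolding orb_def using Kadd[OF k'(1) k(1)] by auto
      qed
      show "orb v \<subseteq> orb w"
      proof
        fix x assume "x \<in> orb v"
        then obtain k' where k': "k' \<in> K" "x = act k' v" unfolding orb_def by auto
        have "x = act (k' + - k) (act k v)"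
          using aa[OF Kadd[OF k'(1) Kneg[OF k(1)]] k(1) v] k' by (simp add: algebra_simps)
        then show "x \<in> orb w" unfolding orb_def k(2) using Kadd[OF k'(1) Kneg[OF k(1)]] by auto
      qed
    qed
  qed
  define rep where "rep v = (SOME w. w \<in> orb v)" for v
  have rep: "rep v \<in> orb v" if "v \<in> S" for v
    unfolding rep_def using self[OF that] by (rule someI)
  obtain ws where ws: "distinct ws" "set ws = rep ` S"
    using finite_distinct_list[of "rep ` S"] S by auto
  have orb_iff: "(\<exists>k\<in>K. v = act k w) \<longleftrightarrow> v \<in> orb w" for v w unfolding orb_def by auto
  have "is_reps K act S ws"
    unfolding is_reps_def orb_iff
  proof (intro conjI ballI)
    show "distinct ws" by fact
    show "set ws \<subseteq> S" using ws rep orbS by auto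
    fix v assume v: "v \<in> S"
    show "\<exists>!w. w \<in> set ws \<and> v \<in> orb w"
    proof
      show "rep v \<in> set ws \<and> v \<in> orb (rep v)"
        using ws rep[OF v] key[OF v rep[OF v]] self[OF v] v by auto
    next
      fix w assume w: "w \<in> set ws \<and> v \<in> orb w"
      then obtain v1 where v1: "v1 \<in> S" "w = rep v1" using ws by auto
      have wS: "w \<in> S" using v1 rep orbS by auto
      have "orb v = orb w" using key[OF wS] w by auto
      also have "orb w = orb v1" using key[OF v1(1) rep[OF v1(1)]] v1 by simp
      finally show "w = rep v" unfolding v1 rep_def by simp
    qed
  qed
  then show ?thesis unfolding orbit_reps_def is_reps_def by (rule someI)
qed

lemma coset_reps_ok:
  fixes H :: "'g::{finite,ab_group_add} set"
  assumes "add_subgroup H"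
  shows "is_reps H (\<lambda>h g. h + g) UNIV (orbit_reps H (\<lambda>h g. h + g) UNIV)"
proof (rule orbit_reps_ok)
  show "add_subgroup H" by fact
  show "\<And>a b v. a \<in> H \<Longrightarrow> b \<in> H \<Longrightarrow> v \<in> UNIV \<Longrightarrow> a + b + v = a + (b + v)"
    by (simp add: add.assoc)
qed auto

locale cosets =
  fixes H :: "'g::{finite,ab_group_add} set" and cs :: "'g list"
  assumes subg: "add_subgroup H" and reps: "is_reps H (\<lambda>h g. h + g) UNIV cs"
begin

lemma H0: "0 \<in> H" and Hadd: "a \<in> H \<Longrightarrow> b \<in> H \<Longrightarrow> a + b \<in> H" and Hneg: "a \<in> H \<Longrightarrow> - a \<in> H"
  using subg unfolding add_subgroup_def by auto

lemma Hdiff: assumes "a \<in> H" "b \<in> H" shows "a - b \<in> H"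
proof -
  have "a + (- b) \<in> H" using assms by (intro Hadd Hneg)
  then show ?thesis by simp
qed

lemma Hdiff_iff: assumes "b \<in> H" shows "a - b \<in> H \<longleftrightarrow> a \<in> H"
proof
  assume "a - b \<in> H"
  then have "(a - b) + b \<in> H" using assms by (rule Hadd)
  then show "a \<in> H" by simp
next
  assume "a \<in> H"
  then show "a - b \<in> H" using assms by (rule Hdiff)
qed

lemma Hneg_iff: "- a \<in> H \<longleftrightarrow> a \<in> H"
proof
  assume "- a \<in> H"
  then have "- (- a) \<in> H" by (rule Hneg)
  then show "a \<in> H" by simp
qed (rule Hneg)

lemma cs_distinct: "distinct cs" using reps unfolding is_reps_def by auto

lemma cs_unique: "\<exists>!c. c \<in> set cs \<and> (\<exists>h\<in>H. g = h + c)"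
  using reps unfolding is_reps_def by auto

abbreviation "m \<equiv> length cs"

lemma cs_diff_in_H: "i < m \<Longrightarrow> j < m \<Longrightarrow> cs ! i - cs ! j \<in> H \<longleftrightarrow> i = j"
proof
  assume ij: "i < m" "j < m" and h: "cs ! i - cs ! j \<in> H"
  have a: "cs ! i \<in> set cs \<and> (\<exists>h\<in>H. cs ! i = h + cs ! i)" using ij H0 by force
  have b: "cs ! j \<in> set cs \<and> (\<exists>h\<in>H. cs ! i = h + cs ! j)"
    using ij h by (intro conjI nth_mem bexI[of _ "cs ! i - cs ! j"]) auto
  have "cs ! i = cs ! j"
    using cs_unique[of "cs ! i"] a b by blast
  then show "i = j" using ij cs_distinct by (simp add: nth_eq_iff_index_eq)
qed (use H0 in simp)

lemma coset_sum:
  fixes f :: "'g \<Rightarrow> 'a::comm_monoid_add"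
  shows "(\<Sum>k<m. \<Sum>y\<in>H. f (a - cs ! k + y)) = (\<Sum>l\<in>UNIV. f l)"
proof -
  have "(\<Sum>k<m. \<Sum>y\<in>H. f (a - cs ! k + y)) = (\<Sum>(k,y)\<in>{..<m} \<times> H. f (a - cs ! k + y))"
    by (rule sum.cartesian_product)
  also have "\<dots> = (\<Sum>x\<in>{..<m} \<times> H. f (a - cs ! fst x + snd x))"
    by (simp add: split_def)
  also have "\<dots> = (\<Sum>l\<in>UNIV. f l)"
  proof (rule sum.reindex_bij_betw)
    show "bij_betw (\<lambda>x. a - cs ! fst x + snd x) ({..<m} \<times> H) UNIV"
      unfolding bij_betw_def
    proof
      show "inj_on (\<lambda>x. a - cs ! fst x + snd x) ({..<m} \<times> H)"
      proof (rule inj_onI)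
        fix x x' assume xs: "x \<in> {..<m} \<times> H" "x' \<in> {..<m} \<times> H" and ex: "a - cs ! fst x + snd x = a - cs ! fst x' + snd x'"
        obtain k y k' y' where xx: "x = (k, y)" "x' = (k', y')" by (cases x, cases x') auto
        have k: "k < m" "y \<in> H" "k' < m" "y' \<in> H" using xs xx by auto
        have e: "a - cs ! k + y = a - cs ! k' + y'" using ex xx by simp
        then have "cs ! k - cs ! k' = y - y'" by (simp add: algebra_simps)
        then have "cs ! k - cs ! k' \<in> H" using Hdiff k by simp
        then have "k = k'" using cs_diff_in_H k by simp
        then show "x = x'" using e xx by simp
      qed
      show "(\<lambda>x. a - cs ! fst x + snd x) ` ({..<m} \<times> H) = UNIV"
      proof -
        have "l \<in> (\<lambda>x. a - cs ! fst x + snd x) ` ({..<m} \<times> H)" for l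
        proof -
          obtain c h where c: "c \<in> set cs" "h \<in> H" "a - l = h + c" using cs_unique[of "a - l"] by auto
          obtain k where k: "k < m" "cs ! k = c" using c(1) by (auto simp: in_set_conv_nth)
          have "l = a - cs ! k + (- h)" using c k by (simp add: algebra_simps)
          then show ?thesis using k Hneg[OF c(2)] by (intro image_eqI[of _ _ "(k, -h)"]) auto
        qed
        then show ?thesis by auto
      qed
    qed
  qed
  finally show ?thesis .
qed

lemma cp_mult:
  fixes p q :: "'g \<Rightarrow>\<^sub>0 'r::comm_ring_1"
  assumes i: "i < m" and j: "j < m"
  shows "coset_part H (cs ! i - cs ! j) (p * q) = (\<Sum>k<m. coset_part H (cs ! i - cs ! k) p * coset_part H (cs ! k - cs ! j) q)"
proof (rule poly_mapping_eqI)
  fix x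
  show "Poly_Mapping.lookup (coset_part H (cs ! i - cs ! j) (p * q)) x =
        Poly_Mapping.lookup (\<Sum>k<m. coset_part H (cs ! i - cs ! k) p * coset_part H (cs ! k - cs ! j) q) x"
  proof (cases "x \<in> H")
    case False
    have "Poly_Mapping.lookup (coset_part H (cs ! i - cs ! k) p * coset_part H (cs ! k - cs ! j) q) x = 0" for k
      unfolding lookup_mult_group lookup_coset_part
      by (rule sum.neutral) (use False Hdiff_iff in auto)
    then show ?thesis using False by (simp add: lookup_sum lookup_coset_part)
  next
    case True
    have "Poly_Mapping.lookup (\<Sum>k<m. coset_part H (cs ! i - cs ! k) p * coset_part H (cs ! k - cs ! j) q) x
       = (\<Sum>k<m. \<Sum>y\<in>UNIV. (if y \<in> H then Poly_Mapping.lookup p (cs ! i - cs ! k + y) else 0) *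
                 (if x - y \<in> H then Poly_Mapping.lookup q (cs ! k - cs ! j + (x - y)) else 0))"
      by (simp add: lookup_sum lookup_mult_group lookup_coset_part)
    also have "\<dots> = (\<Sum>k<m. \<Sum>y\<in>H. Poly_Mapping.lookup p (cs ! i - cs ! k + y) *
                 Poly_Mapping.lookup q (cs ! i - cs ! j + x - (cs ! i - cs ! k + y)))"
    proof (rule sum.cong[OF refl])
      fix k
      have "(\<Sum>y\<in>UNIV. (if y \<in> H then Poly_Mapping.lookup p (cs ! i - cs ! k + y) else 0) *
                 (if x - y \<in> H then Poly_Mapping.lookup q (cs ! k - cs ! j + (x - y)) else 0))
          = (\<Sum>y\<in>H. (if y \<in> H then Poly_Mapping.lookup p (cs ! i - cs ! k + y) else 0) *
                 (if x - y \<in> H then Poly_Mapping.lookup q (cs ! k - cs ! j + (x - y)) else 0))"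
        by (rule sum.mono_neutral_right) auto
      also have "\<dots> = (\<Sum>y\<in>H. Poly_Mapping.lookup p (cs ! i - cs ! k + y) *
                 Poly_Mapping.lookup q (cs ! i - cs ! j + x - (cs ! i - cs ! k + y)))"
        by (rule sum.cong[OF refl]) (use True Hdiff in \<open>auto simp: algebra_simps\<close>)
      finally show "(\<Sum>y\<in>UNIV. (if y \<in> H then Poly_Mapping.lookup p (cs ! i - cs ! k + y) else 0) *
                 (if x - y \<in> H then Poly_Mapping.lookup q (cs ! k - cs ! j + (x - y)) else 0))
          = (\<Sum>y\<in>H. Poly_Mapping.lookup p (cs ! i - cs ! k + y) *
                 Poly_Mapping.lookup q (cs ! i - cs ! j + x - (cs ! i - cs ! k + y)))" .
    qed
    also have "\<dots> = (\<Sum>l\<in>UNIV. Poly_Mapping.lookup p l * Poly_Mapping.lookup q (cs ! i - cs ! j + x - l))"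
      by (rule coset_sum[of "\<lambda>l. Poly_Mapping.lookup p l * Poly_Mapping.lookup q (cs ! i - cs ! j + x - l)"])
    also have "\<dots> = Poly_Mapping.lookup (coset_part H (cs ! i - cs ! j) (p * q)) x"
      using True by (simp add: lookup_coset_part lookup_mult_group)
    finally show ?thesis by simp
  qed
qed

lemma cp_one:
  assumes "k < m" "l < m"
  shows "coset_part H (cs ! k - cs ! l) (1 :: 'g \<Rightarrow>\<^sub>0 'r::comm_ring_1) = (if k = l then 1 else 0)"
proof (rule poly_mapping_eqI)
  fix x
  show "Poly_Mapping.lookup (coset_part H (cs ! k - cs ! l) 1) x = Poly_Mapping.lookup (if k = l then 1 else 0 :: 'g \<Rightarrow>\<^sub>0 'r) x"
  proof (cases "k = l")
    case True then show ?thesis using H0 by (auto simp: lookup_coset_part lookup_one when_def)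
  next
    case False
    have "cs ! k - cs ! l + x \<noteq> 0" if "x \<in> H"
    proof
      assume "cs ! k - cs ! l + x = 0"
      then have "cs ! k - cs ! l = - x" by (simp add: add_eq_0_iff2)
      then show False using cs_diff_in_H[OF assms] False Hneg[OF that] by simp
    qed
    then show ?thesis using False by (auto simp: lookup_coset_part lookup_one when_def)
  qed
qed

definition rr :: "('g \<Rightarrow>\<^sub>0 'r::comm_ring_1) poly \<Rightarrow> nat \<Rightarrow> nat \<Rightarrow> ('g \<Rightarrow>\<^sub>0 'r) poly" where
  "rr P k l = map_poly (coset_part H (cs ! k - cs ! l)) P"

lemma rr_one: "k < m \<Longrightarrow> l < m \<Longrightarrow> rr 1 k l = (if k = l then 1 else 0 :: ('g \<Rightarrow>\<^sub>0 'r::comm_ring_1) poly)"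
  unfolding rr_def map_poly_1 by (simp add: cp_one)

lemma rr_add: "rr (x + y) k l = rr x k l + rr y k l"
  unfolding rr_def by (rule poly_eqI) (simp add: coeff_map_poly coset_part_add)

lemma rr_mult:
  fixes x y :: "('g \<Rightarrow>\<^sub>0 'r::comm_ring_1) poly"
  assumes kl: "k < m" "l < m"
  shows "rr (x * y) k l = (\<Sum>t<m. rr x k t * rr y t l)"
  unfolding rr_def
proof (rule poly_eqI)
  fix n
  have "coeff (map_poly (coset_part H (cs ! k - cs ! l)) (x * y)) n
     = (\<Sum>i\<le>n. \<Sum>t<m. coset_part H (cs ! k - cs ! t) (coeff x i) * coset_part H (cs ! t - cs ! l) (coeff y (n - i)))"
    by (simp add: coeff_map_poly coeff_mult coset_part_sum cp_mult[OF kl])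
  also have "\<dots> = (\<Sum>t<m. \<Sum>i\<le>n. coset_part H (cs ! k - cs ! t) (coeff x i) * coset_part H (cs ! t - cs ! l) (coeff y (n - i)))"
    by (rule sum.swap)
  also have "\<dots> = coeff (\<Sum>t<m. map_poly (coset_part H (cs ! k - cs ! t)) x * map_poly (coset_part H (cs ! t - cs ! l)) y) n"
    by (simp add: coeff_sum coeff_mult coeff_map_poly)
  finally show "coeff (map_poly (coset_part H (cs ! k - cs ! l)) (x * y)) n = coeff (\<Sum>t<m. map_poly (coset_part H (cs ! k - cs ! t)) x * map_poly (coset_part H (cs ! t - cs ! l)) y) n" .
qed

lemma rr_nzd:
  fixes x y :: "('g \<Rightarrow>\<^sub>0 'r::comm_ring_1) poly"
  assumes x: "coeff x 0 = 1" and xy: "det (rmat rr m x) * y = 0"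
  shows "y = 0"
proof -
  interpret c: comm_ring_hom "\<lambda>P :: ('g \<Rightarrow>\<^sub>0 'r) poly. coeff P 0" by (rule coeff0_hom)
  have "map_mat (\<lambda>P. coeff P 0) (rmat rr m x) = 1\<^sub>m m"
  proof (rule eq_matI)
    fix i j assume "i < dim_row (1\<^sub>m m)" "j < dim_col (1\<^sub>m m)"
    then have ij: "i < m" "j < m" by auto
    then show "map_mat (\<lambda>P. coeff P 0) (rmat rr m x) $$ (i,j) = 1\<^sub>m m $$ (i,j)"
      by (simp add: rmat_def rr_def coeff_map_poly x cp_one)
  qed auto
  then have "coeff (det (rmat rr m x)) 0 = 1"
    using c.hom_det[of "rmat rr m x"] by simp
  then show "y = 0" by (rule poly_nzd[OF _ xy])
qed

lemma rr_blk_ctx: "blk_ctx (rr :: ('g \<Rightarrow>\<^sub>0 'r::comm_ring_1) poly \<Rightarrow> _) m (\<lambda>P. coeff P 0)"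
  apply (rule blk_ctx.intro)
  subgoal by (rule rr_one)
  subgoal by (rule rr_add)
  subgoal by (rule rr_mult)
  subgoal by (rule coeff0_hom)
  subgoal by (rule rr_nzd)
  done

end



lemma det_scale_rc:
  fixes C :: "'a::comm_ring_1 mat"
  assumes C: "C \<in> carrier_mat n n"
  shows "det (mat n n (\<lambda>(i,j). d i * C $$ (i,j) * f j)) = (\<Prod>i<n. d i) * (\<Prod>i<n. f i) * det C"
proof -
  have "det (mat n n (\<lambda>(i,j). d i * C $$ (i,j) * f j)) =
    (\<Sum>p\<in>{p. p permutes {0..<n}}. signof p * (\<Prod>i=0..<n. mat n n (\<lambda>(i,j). d i * C $$ (i,j) * f j) $$ (i, p i)))"
    by (rule det_def') simp
  also have "\<dots> = (\<Sum>p\<in>{p. p permutes {0..<n}}. signof p * (\<Prod>i=0..<n. d i * C $$ (i, p i) * f (p i)))"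
  proof (intro sum.cong refl arg_cong2[where f="(*)"] prod.cong)
    fix p i assume "p \<in> {p. p permutes {0..<n}}" "i \<in> {0..<n}"
    then have "p i < n" using permutes_in_image[of p "{0..<n}" i] by auto
    then show "mat n n (\<lambda>(i,j). d i * C $$ (i,j) * f j) $$ (i, p i) = d i * C $$ (i, p i) * f (p i)"
      using \<open>i \<in> {0..<n}\<close> by simp
  qed
  also have "\<dots> = (\<Sum>p\<in>{p. p permutes {0..<n}}. (\<Prod>i<n. d i) * (\<Prod>i<n. f i) * (signof p * (\<Prod>i=0..<n. C $$ (i, p i))))"
  proof (rule sum.cong[OF refl])
    fix p assume "p \<in> {p. p permutes {0..<n}}"
    then have p: "p permutes {0..<n}" by simp
    have "(\<Prod>i=0..<n. f (p i)) = (\<Prod>i=0..<n. f i)"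
      using prod.permute[OF p, of f] by (simp add: o_def)
    then show "signof p * (\<Prod>i=0..<n. d i * C $$ (i, p i) * f (p i)) = (\<Prod>i<n. d i) * (\<Prod>i<n. f i) * (signof p * (\<Prod>i=0..<n. C $$ (i, p i)))"
      by (simp add: prod.distrib atLeast0LessThan ac_simps)
  qed
  also have "\<dots> = (\<Prod>i<n. d i) * (\<Prod>i<n. f i) * det C"
    by (simp add: det_def'[OF C] sum_distrib_left)
  finally show ?thesis .
qed

lemma det_perm_rc:
  fixes B :: "'a::comm_ring_1 mat"
  assumes B: "B \<in> carrier_mat n n" and s: "s permutes {0..<n}"
  shows "det (mat n n (\<lambda>(i,j). B $$ (s i, s j))) = det B"
proof -
  define B' where "B' = mat n n (\<lambda>(i,j). B $$ (i, s j))"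
  have B'c: "B' \<in> carrier_mat n n" unfolding B'_def by simp
  have sl: "s j < n" if "j < n" for j using s that permutes_in_image[OF s, of j] by auto
  have "mat n n (\<lambda>(i,j). B $$ (s i, s j)) = mat n n (\<lambda>(i,j). B' $$ (s i, j))"
    unfolding B'_def by (rule eq_matI) (auto simp: sl)
  then have "det (mat n n (\<lambda>(i,j). B $$ (s i, s j))) = signof s * det B'"
    using det_permute_rows[OF B'c s] by simp
  also have "det B' = det (transpose_mat B')" using det_transpose[OF B'c] by simp
  also have "transpose_mat B' = mat n n (\<lambda>(i,j). transpose_mat B $$ (s i, j))"
    unfolding B'_def using B by (intro eq_matI) (auto simp: sl)
  also have "det \<dots> = signof s * det (transpose_mat B)"
    by (rule det_permute_rows[OF _ s]) (use B in auto)
  also have "det (transpose_mat B) = det B" using det_transpose[OF B] by simp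
  finally have "det (mat n n (\<lambda>(i,j). B $$ (s i, s j))) = (signof s * signof s) * det B"
    by (simp add: mult.assoc)
  moreover have "signof s * signof s = (1::'a)"
    by (metis of_int_1 of_int_mult sign_idempotent)
  ultimately show ?thesis by simp
qed

definition ncount :: "('v,'e) pre_digraph \<Rightarrow> 'v \<Rightarrow> 'v \<Rightarrow> nat" where
  "ncount Y x y = card {e \<in> arcs Y. tail Y e = x \<and> head Y e = y}"

definition Mmat :: "('v,'e) pre_digraph \<Rightarrow> ('g::{finite,ab_group_add} \<Rightarrow> 'v \<Rightarrow> 'v) \<Rightarrow> 'g set \<Rightarrow> 'v list \<Rightarrow> ('g \<Rightarrow>\<^sub>0 int) poly mat" where
  "Mmat Y actv K xs = mat (length xs) (length xs) (\<lambda>(i,j). (if i = j then 1 else 0) - monom (adj_coeff Y actv K (xs ! i) (xs ! j)) 1)"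

lemma gamma_Mmat: "gamma Y actv K = det (Mmat Y actv K (orbit_reps K actv (verts Y)))"
  unfolding gamma_def Mmat_def Let_def ..

lemma adj_coeff_ncount: "adj_coeff Y actv K a b = (\<Sum>k\<in>K. Poly_Mapping.single k (int (ncount Y b (actv k a))))"
  unfolding adj_coeff_def ncount_def ..

lemma lookup_adj_coeff:
  fixes K :: "'g::{finite,ab_group_add} set"
  shows "Poly_Mapping.lookup (adj_coeff Y actv K a b) x = (if x \<in> K then int (ncount Y b (actv x a)) else 0)"
proof -
  have "Poly_Mapping.lookup (adj_coeff Y actv K a b) x = (\<Sum>k\<in>K. if k = x then int (ncount Y b (actv k a)) else 0)"
    unfolding adj_coeff_ncount lookup_sum by (intro sum.cong) (auto simp: lookup_single when_def)
  also have "\<dots> = (if x \<in> K then int (ncount Y b (actv x a)) else 0)" by simp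
  finally show ?thesis .
qed

locale gact =
  fixes Y :: "('v,'e) pre_digraph" and actv :: "'g::{finite,ab_group_add} \<Rightarrow> 'v \<Rightarrow> 'v" and acte :: "'g \<Rightarrow> 'e \<Rightarrow> 'e"
  assumes fin: "fin_digraph Y" and act: "digraph_action Y actv acte" and free: "free_on (verts Y) actv"
begin

lemma av_cl: "v \<in> verts Y \<Longrightarrow> actv g v \<in> verts Y"
  and av0: "v \<in> verts Y \<Longrightarrow> actv 0 v = v"
  and avadd: "v \<in> verts Y \<Longrightarrow> actv (g + h) v = actv g (actv h v)"
  and ae_cl: "e \<in> arcs Y \<Longrightarrow> acte g e \<in> arcs Y"
  and ae0: "e \<in> arcs Y \<Longrightarrow> acte 0 e = e"
  and aeadd: "e \<in> arcs Y \<Longrightarrow> acte (g + h) e = acte g (acte h e)"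
  and ae_tail: "e \<in> arcs Y \<Longrightarrow> tail Y (acte g e) = actv g (tail Y e)"
  and ae_head: "e \<in> arcs Y \<Longrightarrow> head Y (acte g e) = actv g (head Y e)"
  using act unfolding digraph_action_def by auto

lemma av_inv: "v \<in> verts Y \<Longrightarrow> actv (- g) (actv g v) = v"
  using avadd[of v "-g" g] av0 by simp

lemma ae_inv: "e \<in> arcs Y \<Longrightarrow> acte (- g) (acte g e) = e"
  using aeadd[of e "-g" g] ae0 by simp

lemma av_inj: assumes v: "v \<in> verts Y" and e: "actv a v = actv b v" shows "a = b"
proof -
  have "actv (- b + a) v = actv (- b) (actv a v)" by (rule avadd[OF v])
  also have "\<dots> = v" using e av_inv[OF v] by simp
  finally have "- b + a = 0" using free v unfolding free_on_def by blast
  then show ?thesis by (simp add: add_eq_0_iff2 neg_eq_iff_add_eq_0 add.commute)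
qed

lemma av_inj2: "x \<in> verts Y \<Longrightarrow> y \<in> verts Y \<Longrightarrow> actv g x = actv g y \<Longrightarrow> x = y"
  using av_inv by metis

lemma ncount_act:
  assumes x: "x \<in> verts Y" and y: "y \<in> verts Y"
  shows "ncount Y (actv g x) (actv g y) = ncount Y x y"
proof -
  let ?A = "{e \<in> arcs Y. tail Y e = x \<and> head Y e = y}"
  let ?B = "{e \<in> arcs Y. tail Y e = actv g x \<and> head Y e = actv g y}"
  have "bij_betw (acte g) ?A ?B"
  proof (rule bij_betw_byWitness[where f'="acte (- g)"])
    show "\<forall>a\<in>?A. acte (- g) (acte g a) = a" using ae_inv by auto
    show "\<forall>a\<in>?B. acte g (acte (- g) a) = a" using ae_inv[of _ "-g"] by auto
    show "acte g ` ?A \<subseteq> ?B" using ae_cl ae_tail ae_head by auto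
    show "acte (- g) ` ?B \<subseteq> ?A"
    proof
      fix e' assume "e' \<in> acte (- g) ` ?B"
      then obtain e where e: "e \<in> ?B" "e' = acte (- g) e" by auto
      have "tail Y e' = x" "head Y e' = y" using e ae_tail ae_head av_inv x y by auto
      then show "e' \<in> ?A" using e ae_cl by auto
    qed
  qed
  then show ?thesis unfolding ncount_def by (simp add: bij_betw_same_card)
qed

end



lemma const_mult3: "[:a:] * monom A 1 * [:b:] = monom (a * A * b) (1::nat)"
  by (simp add: smult_monom mult.commute[of _ "[:b:]"] mult.assoc) (simp add: ac_simps)

lemma single_mult3: "[:Poly_Mapping.single a 1:] * [:Poly_Mapping.single b 1:] = ([:Poly_Mapping.single (a + b) 1:] :: ('g::{finite,ab_group_add} \<Rightarrow>\<^sub>0 int) poly)"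
  by (simp add: mult_single add.commute)

context gact
begin

lemma ncount_left: "y \<in> verts Y \<Longrightarrow> z \<in> verts Y \<Longrightarrow> ncount Y (actv a y) z = ncount Y y (actv (- a) z)"
  using ncount_act[of y "actv (- a) z" a] av_inv[of z "-a"] av_cl by simp

lemma basis_change:
  assumes H: "add_subgroup H" and xs: "is_reps H actv (verts Y) xs" and ys: "is_reps H actv (verts Y) ys"
  shows "det (Mmat Y actv H ys) = det (Mmat Y actv H xs)"
proof -
  have H0: "0 \<in> H" and Hadd: "\<And>a b. a \<in> H \<Longrightarrow> b \<in> H \<Longrightarrow> a + b \<in> H" and Hneg: "\<And>a. a \<in> H \<Longrightarrow> - a \<in> H"
    using H unfolding add_subgroup_def by auto
  have Hdiff: "a - b \<in> H" if "a \<in> H" "b \<in> H" for a b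
  proof -
    have "a + (- b) \<in> H" using that by (intro Hadd Hneg)
    then show ?thesis by simp
  qed
  define N where "N = length ys"
  define M where "M = length xs"
  have xsV: "xs ! i \<in> verts Y" if "i < M" for i using xs that unfolding is_reps_def M_def by auto
  have ysV: "ys ! i \<in> verts Y" if "i < N" for i using ys that unfolding is_reps_def N_def by auto
  have xsd: "distinct xs" and ysd: "distinct ys" using xs ys unfolding is_reps_def by auto
  have xsu: "\<And>v. v \<in> verts Y \<Longrightarrow> \<exists>!w. w \<in> set xs \<and> (\<exists>k\<in>H. v = actv k w)" using xs unfolding is_reps_def by auto
  have ysu: "\<And>v. v \<in> verts Y \<Longrightarrow> \<exists>!w. w \<in> set ys \<and> (\<exists>k\<in>H. v = actv k w)" using ys unfolding is_reps_def by auto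
  have ex: "\<exists>i. i < M \<and> (\<exists>h\<in>H. ys ! p = actv h (xs ! i))" if p: "p < N" for p
  proof -
    obtain w where w: "w \<in> set xs" "\<exists>k\<in>H. ys ! p = actv k w" using xsu[OF ysV[OF p]] by auto
    then obtain i where "i < M" "xs ! i = w" unfolding M_def by (auto simp: in_set_conv_nth)
    then show ?thesis using w by auto
  qed
  define s where "s p = (if p < N then (SOME i. i < M \<and> (\<exists>h\<in>H. ys ! p = actv h (xs ! i))) else p)" for p
  define t where "t p = (SOME h. h \<in> H \<and> ys ! p = actv h (xs ! s p))" for p
  have s1: "s p < M \<and> (\<exists>h\<in>H. ys ! p = actv h (xs ! s p))" if "p < N" for p
    unfolding s_def using someI_ex[OF ex[OF that]] that by simp
  have st: "s p < M" "t p \<in> H" "ys ! p = actv (t p) (xs ! s p)" if "p < N" for p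
  proof -
    show "s p < M" using s1[OF that] by simp
    have "\<exists>h. h \<in> H \<and> ys ! p = actv h (xs ! s p)" using s1[OF that] by auto
    from someI_ex[OF this] show "t p \<in> H" "ys ! p = actv (t p) (xs ! s p)" unfolding t_def by auto
  qed
  have s_inj: "p = q" if "p < N" "q < N" "s p = s q" for p q
  proof -
    let ?x = "xs ! s p"
    have xV: "?x \<in> verts Y" using st(1)[OF that(1)] xsV by simp
    have "ys ! q = actv (t q - t p) (ys ! p)"
      using st[OF that(1)] st[OF that(2)] that(3) avadd[OF xV, of "t q - t p" "t p"] by simp
    moreover have "t q - t p \<in> H" using st(2) that Hdiff by simp
    moreover have "ys ! p \<in> set ys" using that(1) unfolding N_def by simp
    ultimately have "ys ! p \<in> set ys \<and> (\<exists>k\<in>H. ys ! q = actv k (ys ! p))"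
      by blast
    moreover have "ys ! q \<in> set ys \<and> (\<exists>k\<in>H. ys ! q = actv k (ys ! q))"
      using that H0 av0 ysV unfolding N_def by (auto intro!: bexI[of _ 0])
    ultimately have "ys ! p = ys ! q" using ysu[OF ysV[OF that(2)]] by blast
    then show ?thesis using ysd that unfolding N_def by (simp add: nth_eq_iff_index_eq)
  qed
  have s_surj: "i \<in> s ` {..<N}" if i: "i < M" for i
  proof -
    obtain w where w: "w \<in> set ys" "\<exists>k\<in>H. xs ! i = actv k w" using ysu[OF xsV[OF i]] by auto
    then obtain p where p: "p < N" "ys ! p = w" unfolding N_def by (auto simp: in_set_conv_nth)
    obtain h where h: "h \<in> H" "xs ! i = actv h w" using w by auto
    have xV: "xs ! s p \<in> verts Y" using st(1)[OF p(1)] xsV by simp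
    have "xs ! i = actv (h + t p) (xs ! s p)" using h p st[OF p(1)] avadd[OF xV] by simp
    then have "xs ! s p \<in> set xs \<and> (\<exists>k\<in>H. xs ! i = actv k (xs ! s p))"
      using st[OF p(1)] Hadd h unfolding M_def by auto
    moreover have "xs ! i \<in> set xs \<and> (\<exists>k\<in>H. xs ! i = actv k (xs ! i))"
      using i H0 av0 xsV unfolding M_def by (auto intro!: bexI[of _ 0])
    ultimately have "xs ! s p = xs ! i" using xsu[OF xsV[OF i]] by blast
    then have "s p = i" using xsd i st(1)[OF p(1)] unfolding M_def by (simp add: nth_eq_iff_index_eq)
    then show ?thesis using p by auto
  qed
  have inj: "inj_on s {..<N}" using s_inj by (auto intro: inj_onI)
  have img: "s ` {..<N} = {..<M}" using s_surj st(1) by auto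
  have MN: "M = N" using card_image[OF inj] img by simp
  have sperm: "s permutes {0..<N}"
  proof (rule bij_imp_permutes)
    show "bij_betw s {0..<N} {0..<N}" using inj img MN by (simp add: bij_betw_def atLeast0LessThan)
    show "\<And>x. x \<notin> {0..<N} \<Longrightarrow> s x = x" unfolding s_def by simp
  qed
  define e where "e a = ([:Poly_Mapping.single a 1:] :: ('g \<Rightarrow>\<^sub>0 int) poly)" for a
  have entry: "Mmat Y actv H ys $$ (p,q) = e (- t p) * Mmat Y actv H xs $$ (s p, s q) * e (t q)"
    if pq: "p < N" "q < N" for p q
  proof -
    let ?xp = "xs ! s p" and ?xq = "xs ! s q"
    have xpV: "?xp \<in> verts Y" and xqV: "?xq \<in> verts Y" using st(1) pq xsV by auto
    have spq: "s p < M" "s q < M" using st(1) pq by auto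
    have adj: "adj_coeff Y actv H (ys ! p) (ys ! q) =
        Poly_Mapping.single (- t p) 1 * adj_coeff Y actv H ?xp ?xq * Poly_Mapping.single (t q) 1"
    proof -
      have "Poly_Mapping.single (- t p) 1 * adj_coeff Y actv H ?xp ?xq * Poly_Mapping.single (t q) 1
          = (\<Sum>k\<in>H. Poly_Mapping.single (- t p + k + t q) (int (ncount Y ?xq (actv k ?xp))))"
        unfolding adj_coeff_ncount sum_distrib_left sum_distrib_right by (simp add: mult_single)
      also have "\<dots> = (\<Sum>k\<in>H. Poly_Mapping.single k (int (ncount Y (ys ! q) (actv k (ys ! p)))))"
      proof (rule sum.reindex_bij_witness[where j="\<lambda>k. - t p + k + t q" and i="\<lambda>k. k + t p - t q"])
        fix k assume k: "k \<in> H"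
        show "- t p + (k + t p - t q) + t q = k" by simp
        show "k + t p - t q \<in> H" using k st pq Hadd Hdiff by simp
      next
        fix k assume k: "k \<in> H"
        show "- t p + k + t q + t p - t q = k" by simp
        have "k - t p \<in> H" using k st(2)[OF pq(1)] Hdiff by simp
        then have "k - t p + t q \<in> H" using st(2)[OF pq(2)] Hadd by simp
        then show "- t p + k + t q \<in> H" by (simp add: algebra_simps)
        have "actv (- t p + k + t q) (ys ! p) = actv (- t p + k + t q) (actv (t p) ?xp)" using st pq by simp
        also have "\<dots> = actv (- t p + k + t q + t p) ?xp" by (rule avadd[OF xpV, symmetric])
        also have "- t p + k + t q + t p = t q + k" by (simp add: algebra_simps)
        also have "actv (t q + k) ?xp = actv (t q) (actv k ?xp)" by (rule avadd[OF xpV])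
        finally have "ncount Y (ys ! q) (actv (- t p + k + t q) (ys ! p)) = ncount Y (actv (t q) ?xq) (actv (t q) (actv k ?xp))"
          using st pq by simp
        also have "\<dots> = ncount Y ?xq (actv k ?xp)" using ncount_act xqV av_cl xpV by simp
        finally show "Poly_Mapping.single (- t p + k + t q) (int (ncount Y (ys ! q) (actv (- t p + k + t q) (ys ! p)))) =
            Poly_Mapping.single (- t p + k + t q) (int (ncount Y ?xq (actv k ?xp)))" by simp
      qed
      also have "\<dots> = adj_coeff Y actv H (ys ! p) (ys ! q)" unfolding adj_coeff_ncount ..
      finally show ?thesis by simp
    qed
    have delta: "(if p = q then 1 else 0) = e (- t p) * (if s p = s q then 1 else 0) * e (t q)"
      using s_inj[OF pq] by (auto simp: e_def single_mult3 mult_single)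
    have "Mmat Y actv H ys $$ (p,q) = (if p = q then 1 else 0) - monom (adj_coeff Y actv H (ys ! p) (ys ! q)) 1"
      using pq unfolding Mmat_def N_def by simp
    also have "\<dots> = e (- t p) * ((if s p = s q then 1 else 0) - monom (adj_coeff Y actv H ?xp ?xq) 1) * e (t q)"
      unfolding delta adj e_def const_mult3[symmetric] by (simp add: algebra_simps)
    also have "\<dots> = e (- t p) * Mmat Y actv H xs $$ (s p, s q) * e (t q)"
      using spq unfolding Mmat_def M_def by simp
    finally show ?thesis .
  qed
  have Mc: "Mmat Y actv H xs \<in> carrier_mat N N" unfolding Mmat_def using MN M_def by simp
  have "Mmat Y actv H ys = mat N N (\<lambda>(p,q). e (- t p) * mat N N (\<lambda>(i,j). Mmat Y actv H xs $$ (s i, s j)) $$ (p,q) * e (t q))"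
  proof (rule eq_matI)
    fix p q assume "p < dim_row (mat N N (\<lambda>(p,q). e (- t p) * mat N N (\<lambda>(i,j). Mmat Y actv H xs $$ (s i, s j)) $$ (p,q) * e (t q)))"
      "q < dim_col (mat N N (\<lambda>(p,q). e (- t p) * mat N N (\<lambda>(i,j). Mmat Y actv H xs $$ (s i, s j)) $$ (p,q) * e (t q)))"
    then have pq: "p < N" "q < N" by auto
    have "s p < N" "s q < N" using st(1) pq MN by auto
    then show "Mmat Y actv H ys $$ (p,q) = mat N N (\<lambda>(p,q). e (- t p) * mat N N (\<lambda>(i,j). Mmat Y actv H xs $$ (s i, s j)) $$ (p,q) * e (t q)) $$ (p,q)"
      using entry[OF pq] pq by simp
  qed (auto simp: Mmat_def N_def)
  then have "det (Mmat Y actv H ys) = (\<Prod>i<N. e (- t i)) * (\<Prod>i<N. e (t i)) * det (mat N N (\<lambda>(i,j). Mmat Y actv H xs $$ (s i, s j)))"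
    using det_scale_rc[of "mat N N (\<lambda>(i,j). Mmat Y actv H xs $$ (s i, s j))" N "\<lambda>p. e (- t p)" "\<lambda>q. e (t q)"] by simp
  also have "(\<Prod>i<N. e (- t i)) * (\<Prod>i<N. e (t i)) = 1"
    unfolding prod.distrib[symmetric] by (simp add: e_def single_mult3 mult_single one_pCons[symmetric])
  also have "det (mat N N (\<lambda>(i,j). Mmat Y actv H xs $$ (s i, s j))) = det (Mmat Y actv H xs)"
    by (rule det_perm_rc[OF Mc sperm])
  finally show ?thesis by simp
qed

end



lemma map_of_int_zero: "Poly_Mapping.map (of_int :: int \<Rightarrow> 'r::comm_ring_1) 0 = (0 :: 'g \<Rightarrow>\<^sub>0 'r)"
  by (rule poly_mapping_eqI) (simp add: lookup_map_zero)

lemma to_field_entry: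
  "(to_field ((if b then 1 else 0) - monom a 1) :: ('g::{finite,ab_group_add} \<Rightarrow>\<^sub>0 'f::field) poly)
    = (if b then 1 else 0) - monom (Poly_Mapping.map of_int a) 1"
proof -
  interpret tf: comm_ring_hom "to_field :: ('g \<Rightarrow>\<^sub>0 int) poly \<Rightarrow> ('g \<Rightarrow>\<^sub>0 'f) poly" by (rule to_field_hom)
  have "to_field (monom a 1) = (monom (Poly_Mapping.map of_int a) 1 :: ('g \<Rightarrow>\<^sub>0 'f) poly)"
    unfolding to_field_def by (rule map_poly_monom) (rule map_of_int_zero)
  then show ?thesis by (simp add: tf.hom_minus)
qed

theorem theorem3p5:
  fixes Y :: "('v,'e) pre_digraph"
    and actv :: "'g::{finite,ab_group_add} \<Rightarrow> 'v \<Rightarrow> 'v"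
    and acte :: "'g \<Rightarrow> 'e \<Rightarrow> 'e"
    and H :: "'g set"
  assumes "fin_digraph Y"
    and "strongly_connected Y"
    and "digraph_action Y actv acte"
    and "free_on (verts Y) actv"
    and "add_subgroup H"
  shows "norm_map H (to_field (gamma Y actv UNIV) :: ('g \<Rightarrow>\<^sub>0 'f::{alg_closed_field,field_char_0}) poly)
           = to_field (gamma Y actv H)"
proof -
  interpret g: gact Y actv acte by (rule gact.intro) (rule assms)+
  have finV: "finite (verts Y)" using assms(1) by (rule fin_digraph.finite_verts)
  define cs where "cs = orbit_reps H (\<lambda>h g. h + g) UNIV"
  have csr: "is_reps H (\<lambda>h g. h + g) UNIV cs" unfolding cs_def by (rule coset_reps_ok[OF assms(5)])
  interpret c: cosets H cs by (rule cosets.intro[OF assms(5) csr])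
  define m where "m = length cs"
  have reps_ok: "is_reps K actv (verts Y) (orbit_reps K actv (verts Y))" if "add_subgroup K" for K
    by (rule orbit_reps_ok[OF finV that]) (auto simp: g.av_cl g.av0 g.avadd)
  define ws where "ws = orbit_reps UNIV actv (verts Y)"
  have wsr: "is_reps UNIV actv (verts Y) ws" unfolding ws_def by (rule reps_ok) (simp add: add_subgroup_def)
  define ws' where "ws' = orbit_reps H actv (verts Y)"
  have ws'r: "is_reps H actv (verts Y) ws'" unfolding ws'_def by (rule reps_ok[OF assms(5)])
  define n where "n = length ws"
  have wsV: "ws ! i \<in> verts Y" if "i < n" for i using wsr that unfolding is_reps_def n_def by auto
  have wsd: "distinct ws" using wsr unfolding is_reps_def by auto
  have wsu: "\<And>v. v \<in> verts Y \<Longrightarrow> \<exists>!w. w \<in> set ws \<and> (\<exists>k\<in>UNIV. v = actv k w)" using wsr unfolding is_reps_def by auto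
  define AG where "AG = Mmat Y actv UNIV ws"
  define A where "A = map_mat (to_field :: _ \<Rightarrow> ('g \<Rightarrow>\<^sub>0 'f) poly) AG"
  interpret tf: comm_ring_hom "to_field :: ('g \<Rightarrow>\<^sub>0 int) poly \<Rightarrow> ('g \<Rightarrow>\<^sub>0 'f) poly" by (rule to_field_hom)
  have AGc: "AG \<in> carrier_mat n n" unfolding AG_def Mmat_def n_def by simp
  have Ac: "A \<in> carrier_mat n n" unfolding A_def using AGc by simp
  have detA: "(to_field (gamma Y actv UNIV) :: ('g \<Rightarrow>\<^sub>0 'f) poly) = det A"
    unfolding gamma_Mmat A_def AG_def ws_def by simp
  have Aij: "A $$ (i,j) = (if i = j then 1 else 0) - monom (Poly_Mapping.map of_int (adj_coeff Y actv UNIV (ws ! i) (ws ! j))) 1"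
    if "i < n" "j < n" for i j
  proof -
    have "A $$ (i,j) = to_field (AG $$ (i,j))" using that AGc unfolding A_def by simp
    also have "AG $$ (i,j) = (if i = j then 1 else 0) - monom (adj_coeff Y actv UNIV (ws ! i) (ws ! j)) 1"
      using that unfolding AG_def Mmat_def n_def by simp
    finally show ?thesis by (simp only: to_field_entry)
  qed
  have LHS: "norm_map H (det A) = det (rmat c.rr m (det A))"
    unfolding norm_map_def Let_def cs_def[symmetric] m_def[symmetric] rmat_def
    by (intro arg_cong[where f=det] eq_matI) (auto simp: c.rr_def)
  interpret b: blk_ctx "c.rr :: ('g \<Rightarrow>\<^sub>0 'f) poly \<Rightarrow> _" m "\<lambda>P. coeff P 0"
    unfolding m_def by (rule c.rr_blk_ctx)
  have epsA: "coeff (A $$ (i,j)) 0 = (if i = j then 1 else 0)" if "i < n" "j < n" for i j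
    using that by (simp add: Aij)
  have blk: "det (blkm c.rr m A) = det (rmat c.rr m (det A))"
    by (rule b.blk_det[OF Ac epsA])
  have m0: "0 < m"
  proof -
    obtain c h where "c \<in> set cs" "h \<in> H" "(0::'g) = h + c" using c.cs_unique[of 0] by auto
    then show ?thesis unfolding m_def by (cases cs) auto
  qed
  have csd: "distinct cs" by (rule c.cs_distinct)
  define vs where "vs = map (\<lambda>z. actv (cs ! (z mod m)) (ws ! (z div m))) [0..<n*m]"
  have vs_len: "length vs = n * m" unfolding vs_def by simp
  have vs_nth: "vs ! z = actv (cs ! (z mod m)) (ws ! (z div m))" if "z < n * m" for z
    using that unfolding vs_def by simp
  have zdm: "z div m < n" "z mod m < m" if "z < n * m" for z
    using that m0 by (auto simp: div_less_iff_less_mult)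
  have vsV: "vs ! z \<in> verts Y" if "z < n * m" for z
    using vs_nth[OF that] zdm[OF that] wsV g.av_cl by simp
  have set_vs: "\<exists>i<n. \<exists>k<m. w = actv (cs ! k) (ws ! i)" if wv: "w \<in> set vs" for w
  proof -
    obtain z where "z < n * m" "w = vs ! z" using wv vs_len by (auto simp: in_set_conv_nth)
    then show ?thesis using vs_nth zdm by blast
  qed
  have vs_in: "actv (cs ! k) (ws ! i) \<in> set vs" if "i < n" "k < m" for i k
  proof -
    have "i * m + k < n * m"
    proof -
      have "i * m + k < Suc i * m" using that by simp
      also have "\<dots> \<le> n * m" using that by (intro mult_le_mono1) simp
      finally show ?thesis .
    qed
    moreover have "(i * m + k) div m = i" "(i * m + k) mod m = k" using that m0 by auto
    ultimately show ?thesis using vs_nth[of "i * m + k"] vs_len by (metis nth_mem)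
  qed
  have ws_uniq: "ws ! i = ws ! j" if "i < n" "j < n" "actv a (ws ! i) = actv b (ws ! j)" for i j a b
  proof -
    let ?v = "actv a (ws ! i)"
    have "?v \<in> verts Y" using wsV g.av_cl that by simp
    moreover have "ws ! i \<in> set ws" "ws ! j \<in> set ws" using that n_def by simp_all
    moreover have "\<exists>k\<in>UNIV. ?v = actv k (ws ! i)" by blast
    moreover have "\<exists>k\<in>UNIV. ?v = actv k (ws ! j)" using that(3) by blast
    ultimately show ?thesis using wsu[of ?v] by blast
  qed
  have cs_uniq: "cs ! k = cs ! l" if "k < m" "l < m" "h \<in> H" "h' \<in> H" "h + cs ! k = h' + cs ! l" for k l h h'
  proof -
    have "cs ! k \<in> set cs" "cs ! l \<in> set cs" using that m_def by simp_all
    moreover have "\<exists>hh\<in>H. h + cs ! k = hh + cs ! k" using that(3) by blast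
    moreover have "\<exists>hh\<in>H. h + cs ! k = hh + cs ! l" using that(4,5) by blast
    ultimately show ?thesis using c.cs_unique[of "h + cs ! k"] by blast
  qed
  have vsr: "is_reps H actv (verts Y) vs"
    unfolding is_reps_def
  proof (intro conjI ballI)
    show "distinct vs"
      unfolding distinct_conv_nth vs_len
    proof (intro allI impI)
      fix z1 z2 assume z: "z1 < n * m" "z2 < n * m" "z1 \<noteq> z2"
      show "vs ! z1 \<noteq> vs ! z2"
      proof
        assume e: "vs ! z1 = vs ! z2"
        then have e': "actv (cs ! (z1 mod m)) (ws ! (z1 div m)) = actv (cs ! (z2 mod m)) (ws ! (z2 div m))"
          using vs_nth z by simp
        have wij: "ws ! (z1 div m) = ws ! (z2 div m)" by (rule ws_uniq[OF zdm(1)[OF z(1)] zdm(1)[OF z(2)] e'])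
        then have ij: "z1 div m = z2 div m" using wsd zdm z unfolding n_def by (simp add: nth_eq_iff_index_eq)
        have "cs ! (z1 mod m) = cs ! (z2 mod m)"
          using g.av_inj[OF wsV[OF zdm(1)[OF z(1)]]] e' wij by simp
        then have "z1 mod m = z2 mod m" using csd zdm z unfolding m_def by (simp add: nth_eq_iff_index_eq)
        then have "z1 = z2" using ij by (metis div_mult_mod_eq)
        then show False using z by simp
      qed
    qed
    show "set vs \<subseteq> verts Y" using vsV vs_len by (auto simp: in_set_conv_nth)
    fix v assume v: "v \<in> verts Y"
    obtain w where w: "w \<in> set ws" "\<exists>k\<in>UNIV. v = actv k w" using wsu[OF v] by blast
    obtain i where i: "i < n" "ws ! i = w" using w(1) unfolding n_def by (auto simp: in_set_conv_nth)
    obtain gg where gg: "v = actv gg (ws ! i)" using w i by auto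
    obtain c h where ch: "c \<in> set cs" "h \<in> H" "gg = h + c" using c.cs_unique[of gg] by auto
    obtain k where k: "k < m" "cs ! k = c" using ch(1) unfolding m_def by (auto simp: in_set_conv_nth)
    show "\<exists>!w. w \<in> set vs \<and> (\<exists>k\<in>H. v = actv k w)"
    proof
      show "actv (cs ! k) (ws ! i) \<in> set vs \<and> (\<exists>k'\<in>H. v = actv k' (actv (cs ! k) (ws ! i)))"
        using vs_in[OF i(1) k(1)] ch k gg g.avadd wsV[OF i(1)] by auto
    next
      fix w' assume w': "w' \<in> set vs \<and> (\<exists>k\<in>H. v = actv k w')"
      obtain i' k' where ik': "i' < n" "k' < m" "w' = actv (cs ! k') (ws ! i')" using set_vs w' by blast
      obtain h' where h': "h' \<in> H" "v = actv h' w'" using w' by auto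
      have v2: "v = actv (h' + cs ! k') (ws ! i')" using h' ik' g.avadd wsV by simp
      have v1: "v = actv (h + cs ! k) (ws ! i)" using gg ch k by simp
      have wi: "ws ! i' = ws ! i" using ws_uniq[OF ik'(1) i(1)] v1 v2 by metis
      have "h' + cs ! k' = h + cs ! k" using g.av_inj[OF wsV[OF i(1)]] v1 v2 wi by metis
      then have "cs ! k' = cs ! k" using cs_uniq[OF ik'(2) k(1) h'(1) ch(2)] by simp
      then show "w' = actv (cs ! k) (ws ! i)" using ik' wi by simp
    qed
  qed
  have key: "coset_part H (cs ! k - cs ! l) (Poly_Mapping.map of_int (adj_coeff Y actv UNIV (ws ! i) (ws ! j)))
      = (Poly_Mapping.map of_int (adj_coeff Y actv H (actv (cs ! k) (ws ! i)) (actv (cs ! l) (ws ! j))) :: 'g \<Rightarrow>\<^sub>0 'f)"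
    if ij: "i < n" "j < n" for i j k l
  proof (rule poly_mapping_eqI)
    fix x
    have wi: "ws ! i \<in> verts Y" and wj: "ws ! j \<in> verts Y" using wsV ij by auto
    have "actv x (actv (cs ! k) (ws ! i)) = actv (x + cs ! k) (ws ! i)" by (rule g.avadd[OF wi, symmetric])
    then have "actv (- cs ! l) (actv x (actv (cs ! k) (ws ! i))) = actv (- cs ! l) (actv (x + cs ! k) (ws ! i))"
      by simp
    also have "\<dots> = actv (- cs ! l + (x + cs ! k)) (ws ! i)" by (rule g.avadd[OF wi, symmetric])
    also have "- cs ! l + (x + cs ! k) = cs ! k - cs ! l + x" by (simp add: algebra_simps)
    finally have ac: "actv (- cs ! l) (actv x (actv (cs ! k) (ws ! i))) = actv (cs ! k - cs ! l + x) (ws ! i)" .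
    have "ncount Y (actv (cs ! l) (ws ! j)) (actv x (actv (cs ! k) (ws ! i))) = ncount Y (ws ! j) (actv (cs ! k - cs ! l + x) (ws ! i))"
      using g.ncount_left[OF wj, of "actv x (actv (cs ! k) (ws ! i))" "cs ! l"] g.av_cl wi ac by simp
    then show "Poly_Mapping.lookup (coset_part H (cs ! k - cs ! l) (Poly_Mapping.map of_int (adj_coeff Y actv UNIV (ws ! i) (ws ! j)))) x
      = Poly_Mapping.lookup (Poly_Mapping.map of_int (adj_coeff Y actv H (actv (cs ! k) (ws ! i)) (actv (cs ! l) (ws ! j))) :: 'g \<Rightarrow>\<^sub>0 'f) x"
      by (simp add: lookup_coset_part lookup_map_zero lookup_adj_coeff)
  qed
  have rr_monom: "c.rr (monom b 1) k l = monom (coset_part H (cs ! k - cs ! l) b) 1" for b :: "'g \<Rightarrow>\<^sub>0 'f" and k l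
    unfolding c.rr_def by (rule map_poly_monom) simp
  have blk_eq: "blkm c.rr m A = map_mat to_field (Mmat Y actv H vs)"
  proof (rule eq_matI)
    fix z1 z2 assume "z1 < dim_row (map_mat to_field (Mmat Y actv H vs))" "z2 < dim_col (map_mat to_field (Mmat Y actv H vs))"
    then have z: "z1 < n * m" "z2 < n * m" unfolding Mmat_def vs_len by auto
    note i = zdm[OF z(1)] and j = zdm[OF z(2)]
    have "blkm c.rr m A $$ (z1,z2) = c.rr (A $$ (z1 div m, z2 div m)) (z1 mod m) (z2 mod m)"
      using z Ac by (simp add: blkm_index)
    also have "\<dots> = c.rr (if z1 div m = z2 div m then 1 else 0) (z1 mod m) (z2 mod m)
        - monom (coset_part H (cs ! (z1 mod m) - cs ! (z2 mod m)) (Poly_Mapping.map of_int (adj_coeff Y actv UNIV (ws ! (z1 div m)) (ws ! (z2 div m))))) 1"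
      unfolding Aij[OF i(1) j(1)] b.rdiff[OF i(2) j(2)] rr_monom ..
    also have "c.rr (if z1 div m = z2 div m then 1 else 0) (z1 mod m) (z2 mod m) = (if z1 = z2 then 1 else (0 :: ('g \<Rightarrow>\<^sub>0 'f) poly))"
    proof -
      have "z1 = z2 \<longleftrightarrow> z1 div m = z2 div m \<and> z1 mod m = z2 mod m" by (metis div_mult_mod_eq)
      then show ?thesis using b.r1[OF i(2) j(2)] b.r0[OF i(2) j(2)] by auto
    qed
    also have "coset_part H (cs ! (z1 mod m) - cs ! (z2 mod m)) (Poly_Mapping.map of_int (adj_coeff Y actv UNIV (ws ! (z1 div m)) (ws ! (z2 div m))))
      = (Poly_Mapping.map of_int (adj_coeff Y actv H (vs ! z1) (vs ! z2)) :: 'g \<Rightarrow>\<^sub>0 'f)"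
      unfolding vs_nth[OF z(1)] vs_nth[OF z(2)] by (rule key[OF i(1) j(1)])
    also have "(if z1 = z2 then 1 else 0) - monom (Poly_Mapping.map of_int (adj_coeff Y actv H (vs ! z1) (vs ! z2))) 1
       = map_mat to_field (Mmat Y actv H vs) $$ (z1, z2)"
    proof -
      have "map_mat to_field (Mmat Y actv H vs) $$ (z1, z2) = to_field (Mmat Y actv H vs $$ (z1, z2))"
        using z unfolding Mmat_def vs_len by simp
      also have "Mmat Y actv H vs $$ (z1, z2) = (if z1 = z2 then 1 else 0) - monom (adj_coeff Y actv H (vs ! z1) (vs ! z2)) 1"
        using z unfolding Mmat_def vs_len by simp
      finally show ?thesis by (simp only: to_field_entry) (rule sym)
    qed
    finally show "blkm c.rr m A $$ (z1,z2) = map_mat to_field (Mmat Y actv H vs) $$ (z1, z2)" .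
  qed (use Ac vs_len in \<open>auto simp: Mmat_def\<close>)
  have "(to_field (gamma Y actv H) :: ('g \<Rightarrow>\<^sub>0 'f) poly) = to_field (det (Mmat Y actv H ws'))"
    unfolding gamma_Mmat ws'_def ..
  also have "det (Mmat Y actv H ws') = det (Mmat Y actv H vs)"
    by (rule g.basis_change[OF assms(5) vsr ws'r])
  also have "(to_field (det (Mmat Y actv H vs)) :: ('g \<Rightarrow>\<^sub>0 'f) poly) = det (map_mat to_field (Mmat Y actv H vs))"
    by simp
  also have "\<dots> = det (blkm c.rr m A)" unfolding blk_eq ..
  also have "\<dots> = norm_map H (det A)" unfolding blk LHS ..
  finally show ?thesis unfolding detA by simp
qed


end
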